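(* Let $\Sigma$ be an alphabet with $|\Sigma|=3$. There exists an infinite word over $\Sigma$ that is pseudo-square-free with respect to the mirror image $\operatorname{Mir}$, and for every antimorphic involution $\theta\neq\operatorname{Mir}$ on $\Sigma^*$ there is no infinite word over $\Sigma$ that is pseudo-square-free with respect to $\theta$.
   Context: A function $\theta:\Sigma^*\to\Sigma^*$ is an antimorphic involution if $\theta(uv)=\theta(v)\theta(u)$ and $\theta(\theta(w))=w$ for all words $u,v,w$. The mirror image is $\operatorname{Mir}(b_1\cdots b_n)=b_n\cdots b_1$. A pseudo square with respect to $\theta$ is a nonempty word $u_1u_2$ with $u_1=u_2$ or $u_1=\theta(u_2)$. A word is pseudo-square-free with respect to $\theta$ if no factor (contiguous subword) of it is a pseudo square with respect to $\theta$. *)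

theory Defs
  imports Main
begin

definition antimorphic_involution :: "('a list \<Rightarrow> 'a list) \<Rightarrow> bool" where
  "antimorphic_involution \<theta> \<longleftrightarrow>
     (\<forall>u v. \<theta> (u @ v) = \<theta> v @ \<theta> u) \<and> (\<forall>w. \<theta> (\<theta> w) = w)"

text \<open>Mirror image is rev.\<close>

definition pseudo_square :: "('a list \<Rightarrow> 'a list) \<Rightarrow> 'a list \<Rightarrow> bool" where
  "pseudo_square \<theta> x \<longleftrightarrow>
     x \<noteq> [] \<and> (\<exists>u1 u2. x = u1 @ u2 \<and> (u1 = u2 \<or> u1 = \<theta> u2))"

definition inf_factor :: "(nat \<Rightarrow> 'a) \<Rightarrow> 'a list \<Rightarrow> bool" where
  "inf_factor w x \<longleftrightarrow> (\<exists>i. x = map w [i..<i + length x])"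

definition inf_pseudo_square_free :: "('a list \<Rightarrow> 'a list) \<Rightarrow> (nat \<Rightarrow> 'a) \<Rightarrow> bool" where
  "inf_pseudo_square_free \<theta> w \<longleftrightarrow> (\<forall>x. inf_factor w x \<longrightarrow> \<not> pseudo_square \<theta> x)"

end

theory Submission
  imports Defs
begin

fun tm :: "nat \<Rightarrow> bool" where
  "tm n = (if n = 0 then False else if even n then tm (n div 2) else \<not> tm (n div 2))"

declare tm.simps[simp del]

lemma tm_even[simp]: "tm (2*m) = tm m"
  by (cases "m = 0") (simp_all add: tm.simps[of "2*m"] tm.simps[of 0])

lemma tm_odd[simp]: "tm (2*m+1) = (\<not> tm m)"
  by (subst tm.simps) simp

lemma tm_odd2[simp]: "tm (Suc (2*m)) = (\<not> tm m)"
  using tm_odd[of m] by simp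

lemma tm_ev': "n = 2*m \<Longrightarrow> tm n = tm m" by simp
lemma tm_od': "n = 2*m+1 \<Longrightarrow> tm n = (\<not> tm m)" by simp

lemma tm_eqA: "tm j = tm (Suc j) \<Longrightarrow> odd j"
proof (rule ccontr)
  assume "tm j = tm (Suc j)" "\<not> odd j"
  then obtain m where "j = 2*m" by auto
  with \<open>tm j = tm (Suc j)\<close> show False using tm_odd[of m] by simp
qed

lemma tm_three: "tm m = tm (m+1) \<Longrightarrow> tm (m+1) = tm (m+2) \<Longrightarrow> False"
  using tm_eqA[of m] tm_eqA[of "m+1"] by simp

lemma tm_alt5:
  assumes "\<forall>k<4. tm (j+k) \<noteq> tm (j+k+1)"
  shows False
proof -
  have a0: "tm j \<noteq> tm (j+1)" using assms[rule_format, of 0] by simp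
  have a1: "tm (j+1) \<noteq> tm (j+2)"
  proof -
    have "tm (j+1) \<noteq> tm (j+1+1)" using assms[rule_format, of 1] by simp
    moreover have "j+1+1 = j+2" by simp
    ultimately show ?thesis by metis
  qed
  have a2: "tm (j+2) \<noteq> tm (j+3)"
  proof -
    have "tm (j+2) \<noteq> tm (j+2+1)" using assms[rule_format, of 2] by simp
    moreover have "j+2+1 = j+3" by simp
    ultimately show ?thesis by metis
  qed
  have a3: "tm (j+3) \<noteq> tm (j+4)"
  proof -
    have "tm (j+3) \<noteq> tm (j+3+1)" using assms[rule_format, of 3] by simp
    moreover have "j+3+1 = j+4" by simp
    ultimately show ?thesis by metis
  qed
  show False
  proof (cases "even j")
    case True
    then obtain m where j: "j = 2*m" by auto
    have t0: "tm j = tm m" by (rule tm_ev') (simp add: j)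
    have t1: "tm (j+1) = (\<not> tm m)" by (rule tm_od') (simp add: j)
    have t2: "tm (j+2) = tm (m+1)" by (rule tm_ev') (simp add: j)
    have t3: "tm (j+3) = (\<not> tm (m+1))" by (rule tm_od') (simp add: j)
    have t4: "tm (j+4) = tm (m+2)" by (rule tm_ev') (simp add: j)
    have "tm m = tm (m+1)" "tm (m+1) = tm (m+2)"
      using a0 a1 a2 a3 unfolding t0 t1 t2 t3 t4 by blast+
    then show False using tm_three by blast
  next
    case False
    then obtain m where j: "j = 2*m+1" by (metis oddE)
    have t0: "tm j = (\<not> tm m)" by (rule tm_od') (simp add: j)
    have t1: "tm (j+1) = tm (m+1)" by (rule tm_ev') (simp add: j)
    have t2: "tm (j+2) = (\<not> tm (m+1))" by (rule tm_od') (simp add: j)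
    have t3: "tm (j+3) = tm (m+2)" by (rule tm_ev') (simp add: j)
    have "tm m = tm (m+1)" "tm (m+1) = tm (m+2)"
      using a0 a1 a2 unfolding t0 t1 t2 t3 by blast+
    then show False using tm_three by blast
  qed
qed

lemma tm_overlap_free:
  "0 < p \<Longrightarrow> \<forall>k\<le>p. tm (i+k+p) = tm (i+k) \<Longrightarrow> False"
proof (induction p arbitrary: i rule: less_induct)
  case (less p)
  show False
  proof (cases "even p")
    case True
    then obtain q where p: "p = 2*q" by auto
    with less.prems have q: "0 < q" "q < p" by auto
    have "\<forall>k\<le>q. tm (i div 2 + k + q) = tm (i div 2 + k)"
    proof (intro allI impI)
      fix k assume k: "k \<le> q"
      show "tm (i div 2 + k + q) = tm (i div 2 + k)"
      proof (cases "even i")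
        case True
        then obtain h where i: "i = 2*h" by auto
        have "tm (i + 2*k + p) = tm (i + 2*k)" using less.prems(2) k p by auto
        moreover have "tm (i + 2*k + p) = tm (h+k+q)" by (rule tm_ev') (simp add: i p)
        moreover have "tm (i + 2*k) = tm (h+k)" by (rule tm_ev') (simp add: i)
        moreover have "i div 2 = h" using i by auto
        ultimately show ?thesis by simp
      next
        case False
        then obtain h where i: "i = 2*h+1" by (metis oddE)
        have "tm (i + 2*k + p) = tm (i + 2*k)" using less.prems(2) k p by auto
        moreover have "tm (i + 2*k + p) = (\<not> tm (h+k+q))" by (rule tm_od') (simp add: i p)
        moreover have "tm (i + 2*k) = (\<not> tm (h+k))" by (rule tm_od') (simp add: i)
        moreover have "i div 2 = h" using i by auto
        ultimately show ?thesis by simp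
      qed
    qed
    then show False using less.IH[OF q(2) q(1)] by blast
  next
    case odd: False
    show False
    proof (cases "\<exists>k<p. tm (i+k) = tm (i+k+1)")
      case True
      then obtain k where k: "k < p" "tm (i+k) = tm (i+k+1)" by blast
      have o1: "odd (i+k)" by (rule tm_eqA) (simp add: k)
      have "tm (i+k+p) = tm (i+k)" using less.prems(2) k by auto
      moreover have "tm (i+(k+1)+p) = tm (i+(k+1))"
        using less.prems(2)[rule_format, of "k+1"] k(1) by linarith
      moreover have "i+(k+1)+p = Suc (i+k+p)" "i+(k+1) = i+k+1" by simp_all
      ultimately have "tm (i+k+p) = tm (Suc (i+k+p))" using k(2) by metis
      then have "odd (i+k+p)" by (rule tm_eqA)
      with o1 odd show False by simp
    next
      case False
      then have alt1: "\<forall>k<p. tm (i+k) \<noteq> tm (i+k+1)" by blast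
      have alt: "\<forall>k<2*p. tm (i+k) \<noteq> tm (i+k+1)"
      proof (intro allI impI)
        fix k assume k: "k < 2*p"
        show "tm (i+k) \<noteq> tm (i+k+1)"
        proof (cases "k < p")
          case True then show ?thesis using alt1 by blast
        next
          case False
          then obtain k' where k': "k = p + k'" "k' < p" using k
            by (metis add.commute le_Suc_ex less_diff_conv2 add_diff_cancel_left' mult_2 not_less)
          have "tm (i+k'+p) = tm (i+k')" using less.prems(2) k' by auto
          moreover have "tm (i+(k'+1)+p) = tm (i+(k'+1))"
            using less.prems(2)[rule_format, of "k'+1"] k'(2) by linarith
          moreover have "tm (i+k') \<noteq> tm (i+(k'+1))" using alt1 k' by simp
          moreover have "i+k = i+k'+p" "i+k+1 = i+(k'+1)+p" using k' by simp_all
          ultimately show ?thesis by metis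
        qed
      qed
      have "p \<noteq> 1"
      proof
        assume "p = 1"
        then show False using alt1 less.prems(2) by (auto dest: spec[of _ 0])
      qed
      with odd less.prems(1) have "p \<ge> 3" by presburger
      then have "\<forall>k<4. tm (i+k) \<noteq> tm (i+k+1)" using alt by auto
      then show False by (rule tm_alt5)
    qed
  qed
qed

definition dd :: "nat \<Rightarrow> nat" where
  "dd n = (if tm n = tm (Suc n) then 1 else if tm n then 0 else 2)"

lemma dd_eq1: "dd n = dd m \<Longrightarrow> (tm n = tm m) = (tm (Suc n) = tm (Suc m))"
  unfolding dd_def by (auto split: if_splits)

lemma dd_eq2: "dd n = dd m \<Longrightarrow> tm n \<noteq> tm m \<Longrightarrow> tm n = tm (Suc n)"
  unfolding dd_def by (auto split: if_splits)

lemma dd_sqfree: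
  assumes p: "0 < p" and sq: "\<forall>k<p. dd (i+k) = dd (i+p+k)"
  shows False
proof -
  have E: "\<forall>k\<le>p. (tm (i+k) = tm (i+k+p)) = (tm i = tm (i+p))"
  proof (intro allI impI)
    fix k assume "k \<le> p"
    then show "(tm (i+k) = tm (i+k+p)) = (tm i = tm (i+p))"
    proof (induction k)
      case 0 then show ?case by simp
    next
      case (Suc k)
      then have "dd (i+k) = dd (i+p+k)" using sq by auto
      from dd_eq1[OF this] Suc show ?case by (simp add: add.commute add.left_commute)
    qed
  qed
  show False
  proof (cases "tm i = tm (i+p)")
    case True
    then have "\<forall>k\<le>p. tm (i+k+p) = tm (i+k)" using E by auto
    then show False using tm_overlap_free p by blast
  next
    case False
    have c: "\<forall>k<p. tm (i+k) = tm (Suc (i+k))"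
    proof (intro allI impI)
      fix k assume k: "k < p"
      have "dd (i+k) = dd (i+p+k)" using sq k by auto
      moreover have "tm (i+k) \<noteq> tm (i+p+k)"
      proof -
        have "(tm (i+k) = tm (i+k+p)) = (tm i = tm (i+p))" using E k by simp
        then have "tm (i+k) \<noteq> tm (i+k+p)" using False by simp
        moreover have "i+k+p = i+p+k" by simp
        ultimately show ?thesis by metis
      qed
      ultimately show "tm (i+k) = tm (Suc (i+k))" by (rule dd_eq2)
    qed
    have "\<forall>k\<le>p. tm (i+k) = tm i"
    proof (intro allI impI)
      fix k assume "k \<le> p"
      then show "tm (i+k) = tm i"
        by (induction k) (use c in auto)
    qed
    then show False using False by auto
  qed
qed

lemma nth_factor:
  assumes "\<forall>k<length x. x!k = w (i+k)"
  shows "inf_factor w x"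
  unfolding inf_factor_def
  by (rule exI[of _ i], rule nth_equalityI) (use assms in auto)

lemma factor_nth:
  assumes "inf_factor w x"
  obtains i where "\<forall>k<length x. x!k = w (i+k)"
proof -
  obtain i where x: "x = map w [i..<i+length x]" using assms unfolding inf_factor_def by blast
  have "x!k = w (i+k)" if k: "k < length x" for k
  proof -
    have "map w [i..<i+length x] ! k = w (i+k)" using k by simp
    then show ?thesis using x by metis
  qed
  then show ?thesis using that by blast
qed

lemma card3:
  assumes "card (UNIV :: 'a set) = 3"
  obtains a b c :: 'a where "a \<noteq> b" "a \<noteq> c" "b \<noteq> c" "UNIV = {a,b,c}"
  using assms by (metis card_3_iff)

lemma part1:
  assumes "card (UNIV :: 'a set) = 3"
  shows "\<exists>w :: nat \<Rightarrow> 'a. inf_pseudo_square_free rev w"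
proof -
  obtain a b c :: 'a where abc: "a \<noteq> b" "a \<noteq> c" "b \<noteq> c" using card3[OF assms] by metis
  define w where "w n = (if dd n = 0 then a else if dd n = 1 then b else c)" for n
  have dd2: "dd n \<le> 2" for n unfolding dd_def by auto
  have winj: "w n = w m \<longleftrightarrow> dd n = dd m" for n m
    using dd2[of n] dd2[of m] abc unfolding w_def by (auto split: if_splits)
  have "inf_pseudo_square_free rev w"
    unfolding inf_pseudo_square_free_def
  proof (intro allI impI notI)
    fix x assume fx: "inf_factor w x" and ps: "pseudo_square rev x"
    obtain i where xi: "\<forall>k<length x. x!k = w (i+k)" using factor_nth[OF fx] by blast
    from ps obtain u1 u2 where x: "x \<noteq> []" "x = u1 @ u2" "u1 = u2 \<or> u1 = rev u2"
      unfolding pseudo_square_def by blast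
    show False
    proof (cases "u1 = u2")
      case True
      define p where "p = length u1"
      have p0: "0 < p" using x True p_def by auto
      have "\<forall>k<p. dd (i+k) = dd (i+p+k)"
      proof (intro allI impI)
        fix k assume k: "k < p"
        have "x!k = u1!k" using x k p_def by (simp add: nth_append)
        moreover have "x!(p+k) = u1!k" using x k p_def True by (simp add: nth_append)
        moreover have "length x = 2*p" using x True p_def by simp
        moreover have "k < length x" "p+k < length x" using k \<open>length x = 2*p\<close> by auto
        ultimately have "w (i+k) = w (i+(p+k))" using xi by metis
        then show "dd (i+k) = dd (i+p+k)" using winj by (simp add: add.assoc)
      qed
      then show False using dd_sqfree p0 by blast
    next
      case False
      then have r: "u1 = rev u2" using x by blast
      define p where "p = length u2"
      have p0: "0 < p" using x r p_def by auto
      have l: "length u1 = p" using r p_def by simp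
      have "x!(p-1) = u1!(p-1)" using x l p0 by (simp add: nth_append)
      also have "\<dots> = u2!0" using r l p0 p_def by (simp add: rev_nth)
      also have "\<dots> = x!p" using x l by (simp add: nth_append)
      finally have xx: "x!(p-1) = x!p" .
      have lx: "length x = p + p" using x l p_def by simp
      have "x!(p-1) = w (i+(p-1))" using xi lx p0 by simp
      moreover have "x!p = w (i+p)" using xi lx p0 by simp
      ultimately have "w (i+(p-1)) = w (i+p)" using xx by simp
      then have "dd (i+(p-1)+0) = dd (i+(p-1)+1+0)" using winj p0 by simp
      then have "\<forall>k<1. dd ((i+(p-1))+k) = dd ((i+(p-1))+1+k)" by simp
      then show False using dd_sqfree[of 1 "i+(p-1)"] by simp
    qed
  qed
  then show ?thesis by blast
qed

lemma ai_nil: "antimorphic_involution \<theta> \<Longrightarrow> \<theta> [] = []"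
  unfolding antimorphic_involution_def
  by (metis append_Nil append_self_conv2 self_append_conv)

lemma ai_cons:
  assumes "antimorphic_involution \<theta>"
  shows "\<theta> (a#xs) = \<theta> xs @ \<theta> [a]"
proof -
  have h: "\<forall>u v. \<theta> (u@v) = \<theta> v @ \<theta> u" using assms unfolding antimorphic_involution_def by (rule conjunct1)
  have "\<theta> ([a]@xs) = \<theta> xs @ \<theta> [a]" by (rule h[rule_format])
  then show ?thesis by (simp only: append_Cons append_Nil)
qed

lemma ai_inv: "antimorphic_involution \<theta> \<Longrightarrow> \<theta> (\<theta> w) = w"
  unfolding antimorphic_involution_def by (drule conjunct2) (erule spec)

lemma ai_ne: "antimorphic_involution \<theta> \<Longrightarrow> \<theta> [a] \<noteq> []"
  using ai_inv[of \<theta> "[a]"] ai_nil[of \<theta>] by auto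

lemma ai_len: "antimorphic_involution \<theta> \<Longrightarrow> length xs \<le> length (\<theta> xs)"
proof (induction xs)
  case Nil then show ?case by simp
next
  case (Cons a xs)
  have "\<theta> [a] \<noteq> []" by (rule ai_ne[OF Cons.prems])
  then have "1 \<le> length (\<theta> [a])" by (cases "\<theta> [a]") simp_all
  moreover have "length (\<theta> (a#xs)) = length (\<theta> xs) + length (\<theta> [a])"
    using ai_cons[OF Cons.prems, of a xs] by simp
  moreover have "length xs \<le> length (\<theta> xs)" by (rule Cons.IH[OF Cons.prems])
  ultimately show ?case by simp
qed

lemma ai_single: "antimorphic_involution \<theta> \<Longrightarrow> \<theta> [a] = [hd (\<theta> [a])]"
proof -
  assume A: "antimorphic_involution \<theta>"
  have "length (\<theta> [a]) \<le> length (\<theta> (\<theta> [a]))" by (rule ai_len[OF A])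
  then have "length (\<theta> [a]) \<le> 1" using ai_inv[OF A] by simp
  moreover have "\<theta> [a] \<noteq> []" by (rule ai_ne[OF A])
  ultimately show ?thesis
  proof (cases "\<theta> [a]")
    case (Cons x ys)
    with \<open>length (\<theta> [a]) \<le> 1\<close> have "ys = []" by simp
    then show ?thesis using Cons by simp
  qed simp
qed

lemma ai_form: "antimorphic_involution \<theta> \<Longrightarrow> \<theta> xs = rev (map (\<lambda>a. hd (\<theta> [a])) xs)"
proof (induction xs)
  case Nil then show ?case using ai_nil[OF Nil] by simp
next
  case (Cons a xs)
  obtain y where y: "y = hd (\<theta> [a])" by blast
  have h: "\<theta> [a] = [y]" unfolding y by (rule ai_single[OF Cons.prems])
  have "\<theta> (a#xs) = \<theta> xs @ [y]"
    using ai_cons[OF Cons.prems, of a xs] h by simp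
  moreover have e1: "\<theta> xs = rev (map (\<lambda>a. hd (\<theta> [a])) xs)" by (rule Cons.IH[OF Cons.prems])
  ultimately show ?case unfolding y by simp
qed

lemma nps:
  assumes "inf_pseudo_square_free \<theta> w" "\<forall>k<length x. x!k = w (i+k)"
  shows "\<not> pseudo_square \<theta> x"
  using assms nth_factor unfolding inf_pseudo_square_free_def by blast

lemma part2:
  assumes card: "card (UNIV :: 'a set) = 3" and A: "antimorphic_involution \<theta>" and ne: "\<theta> \<noteq> rev"
    and free: "inf_pseudo_square_free \<theta> (w :: nat \<Rightarrow> 'a)"
  shows False
proof -
  define \<sigma> where "\<sigma> a = hd (\<theta> [a])" for a
  have th: "\<theta> xs = rev (map \<sigma> xs)" for xs unfolding \<sigma>_def by (rule ai_form[OF A])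
  have ss: "\<sigma> (\<sigma> a) = a" for a using ai_inv[OF A, of "[a]"] by (simp add: th)
  obtain a where sa: "\<sigma> a \<noteq> a"
  proof (rule ccontr)
    assume "\<not> thesis"
    with that have "\<forall>a. \<sigma> a = a" by blast
    then have "\<theta> = rev" using th by (intro ext) (simp add: map_idI)
    with ne show False by blast
  qed
  define b where "b = \<sigma> a"
  have sb: "\<sigma> b = a" using ss b_def by simp
  have fin: "finite (UNIV :: 'a set)" using card by (metis card.infinite zero_neq_numeral)
  have "card {a, b} < card (UNIV :: 'a set)" using card by (simp add: card_insert_if)
  then have "{a,b} \<noteq> (UNIV :: 'a set)" by auto
  then obtain c where c: "c \<notin> {a,b}" by blast
  have ab: "a \<noteq> b" using sa b_def by simp
  have univ: "(UNIV :: 'a set) = {a,b,c}"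
  proof (rule card_subset_eq[symmetric, OF fin])
    show "{a,b,c} \<subseteq> UNIV" by simp
    show "card {a, b, c} = card (UNIV :: 'a set)" using card c ab by (auto simp add: card_insert_if)
  qed
  have all: "x = a \<or> x = b \<or> x = c" for x using univ by blast
  have sc: "\<sigma> c = c"
  proof -
    have "\<sigma> c \<noteq> a" using ss[of c] b_def c by auto
    moreover have "\<sigma> c \<noteq> b" using ss[of c] sb c by auto
    ultimately show ?thesis using all[of "\<sigma> c"] by blast
  qed
  have adj1: "w n \<noteq> w (Suc n)" for n
  proof
    assume e: "w n = w (Suc n)"
    have "\<not> pseudo_square \<theta> [w n, w (Suc n)]"
      by (rule nps[OF free, of _ n]) (auto simp: less_Suc_eq)
    moreover have "pseudo_square \<theta> [w n, w (Suc n)]"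
      unfolding pseudo_square_def using e by (intro conjI exI[of _ "[w n]"] exI[of _ "[w n]"]) auto
    ultimately show False by blast
  qed
  have adj2: "w n \<noteq> \<sigma> (w (Suc n))" for n
  proof
    assume e: "w n = \<sigma> (w (Suc n))"
    have "\<not> pseudo_square \<theta> [w n, w (Suc n)]"
      by (rule nps[OF free, of _ n]) (auto simp: less_Suc_eq)
    moreover have "pseudo_square \<theta> [w n, w (Suc n)]"
      unfolding pseudo_square_def using e
      by (intro conjI exI[of _ "[w n]"] exI[of _ "[w (Suc n)]"]) (auto simp: th)
    ultimately show False by blast
  qed
  have sq4: "\<not> (w n = w (n+2) \<and> w (n+1) = w (n+3))" for n
  proof
    assume e: "w n = w (n+2) \<and> w (n+1) = w (n+3)"
    let ?u = "[w n, w (n+1)]"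
    have "\<not> pseudo_square \<theta> (?u @ ?u)"
    proof (rule nps[OF free, of _ n], intro allI impI)
      fix k assume "k < length (?u @ ?u)"
      then have "k < 4" by simp
      then have "k = 0 \<or> k = 1 \<or> k = 2 \<or> k = 3" by arith
      moreover have "w (n+2) = w n" "w (n+3) = w (n+1)" using e by simp_all
      ultimately show "(?u @ ?u)!k = w (n+k)" by (elim disjE) simp_all
    qed
    moreover have "pseudo_square \<theta> (?u @ ?u)" unfolding pseudo_square_def
      by (intro conjI exI[of _ ?u] exI[of _ ?u]) auto
    ultimately show False by blast
  qed
  have cc: "w n = c \<or> w (Suc n) = c" for n
  proof (rule ccontr)
    assume h: "\<not> (w n = c \<or> w (Suc n) = c)"
    have sa': "\<sigma> a = b" using b_def by simp
    have "w n = a \<or> w n = b" "w (Suc n) = a \<or> w (Suc n) = b" using all h by blast+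
    then show False using adj1[of n] adj2[of n] sa' sb by auto
  qed
  have step: "w n = c \<Longrightarrow> w (n+1) \<noteq> c \<and> w (n+2) = c" for n
    using adj1[of n] cc[of "Suc n"] by (simp add: numeral_eq_Suc)
  obtain i where wi: "w i = c" using cc[of 0] by blast
  have s1: "w (n+1) \<noteq> c" if "w n = c" for n using step[OF that] by blast
  have s2: "w (n+2) = c" if "w n = c" for n using step[OF that] by blast
  have c2: "w (i+2) = c" using s2[OF wi] .
  have c4: "w (i+4) = c"
  proof -
    have "w (i+2+2) = c" using s2[OF c2] .
    moreover have "i+2+2 = i+4" by simp
    ultimately show ?thesis by metis
  qed
  have c6: "w (i+6) = c"
  proof -
    have "w (i+4+2) = c" using s2[OF c4] .
    moreover have "i+4+2 = i+6" by simp
    ultimately show ?thesis by metis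
  qed
  have n1: "w (i+1) \<noteq> c" using s1[OF wi] .
  have n3: "w (i+3) \<noteq> c"
  proof -
    have "w (i+2+1) \<noteq> c" using s1[OF c2] .
    moreover have "i+2+1 = i+3" by simp
    ultimately show ?thesis by metis
  qed
  have n5: "w (i+5) \<noteq> c"
  proof -
    have "w (i+4+1) \<noteq> c" using s1[OF c4] .
    moreover have "i+4+1 = i+5" by simp
    ultimately show ?thesis by metis
  qed
  have n7: "w (i+7) \<noteq> c"
  proof -
    have "w (i+6+1) \<noteq> c" using s1[OF c6] .
    moreover have "i+6+1 = i+7" by simp
    ultimately show ?thesis by metis
  qed
  have d1: "w (i+1) \<noteq> w (i+3)" using sq4[of i] wi c2 by simp
  have d2: "w (i+3) \<noteq> w (i+5)"
  proof -
    have "\<not> (w (i+2) = w (i+2+2) \<and> w (i+2+1) = w (i+2+3))" by (rule sq4)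
    moreover have "i+2+2 = i+4" "i+2+1 = i+3" "i+2+3 = i+5" by simp_all
    ultimately show ?thesis using c2 c4 by metis
  qed
  have d3: "w (i+5) \<noteq> w (i+7)"
  proof -
    have "\<not> (w (i+4) = w (i+4+2) \<and> w (i+4+1) = w (i+4+3))" by (rule sq4)
    moreover have "i+4+2 = i+6" "i+4+1 = i+5" "i+4+3 = i+7" by simp_all
    ultimately show ?thesis using c4 c6 by metis
  qed
  have ab1: "w (i+1) = a \<or> w (i+1) = b" using all n1 by blast
  have ab3: "w (i+3) = a \<or> w (i+3) = b" using all n3 by blast
  have ab5: "w (i+5) = a \<or> w (i+5) = b" using all n5 by blast
  have ab7: "w (i+7) = a \<or> w (i+7) = b" using all n7 by blast
  have e5: "w (i+5) = w (i+1)" using d1 d2 ab1 ab3 ab5 by auto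
  have e7: "w (i+7) = w (i+3)" using d2 d3 ab3 ab5 ab7 by auto
  let ?u = "[w i, w (i+1), w (i+2), w (i+3)]"
  have "\<forall>k<length (?u @ ?u). (?u @ ?u)!k = w (i+k)"
  proof (intro allI impI)
    fix k assume "k < length (?u @ ?u)"
    then have "k < 8" by simp
    then have "k = 0 \<or> k = 1 \<or> k = 2 \<or> k = 3 \<or> k = 4 \<or> k = 5 \<or> k = 6 \<or> k = 7" by arith
    then show "(?u @ ?u)!k = w (i+k)" using wi c2 c4 c6 e5 e7 by auto
  qed
  then have "\<not> pseudo_square \<theta> (?u @ ?u)" by (rule nps[OF free])
  moreover have "pseudo_square \<theta> (?u @ ?u)" unfolding pseudo_square_def
      by (intro conjI exI[of _ ?u] exI[of _ ?u]) auto
  ultimately show False by blast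
qed

theorem mainTheorem9:
  assumes "card (UNIV :: 'a set) = 3"
  shows "(\<exists>w :: nat \<Rightarrow> 'a. inf_pseudo_square_free rev w) \<and>
         (\<forall>\<theta> :: 'a list \<Rightarrow> 'a list. antimorphic_involution \<theta> \<and> \<theta> \<noteq> rev \<longrightarrow>
            \<not> (\<exists>w :: nat \<Rightarrow> 'a. inf_pseudo_square_free \<theta> w))"
  using part1[OF assms] part2[OF assms] by blast

end
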